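(* Let $\Delta$ be a simplicial complex on the vertex set $\{1,\ldots,n\}$, $V=\Bbbk^n$ over an algebraically closed field $\Bbbk$, and for each face $F\in\Delta$ let $X(F)\subseteq\mathbb PV$ be the coordinate projective subspace using only the coordinates in $F$. Let $X(\Delta)=\bigcup_{F\in\Delta}X(F)$ (the projective Stanley–Reisner scheme of $\Delta$), invariant under the torus $T=\mathbb G_m^n$ scaling the coordinates. Let $\Phi_S:\{1,\ldots,n\}\to\mathbb Z$ be strictly increasing and let $S:\mathbb G_m\to T$ act by $S(z)\cdot[x_1,\ldots,x_n]=[z^{\Phi_S(1)}x_1,\ldots,z^{\Phi_S(n)}x_n]$. Then, identifying the fixed point $[0,\ldots,0,1,0,\ldots,0]$ (with $1$ in position $i$) with $i$, the simplicial complex $\Delta(X(\Delta),S)$ of closure chains equals $\Delta$. In particular, every finite simplicial complex arises as a complex of closure chains.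
   Context: For a projective $T$-invariant scheme $X$ with $X^S=X^T$ finite and $f\in X^T$, the B-B stratum is $X_f=\{x\in X:\lim_{z\to0}S(z)\cdot x=f\}$. Define $\overline{X_\emptyset}=X$ and $\overline{X_{f_0,\ldots,f_k}}=\overline{\overline{X_{f_0,\ldots,f_{k-1}}}\cap X_{f_k}}$. A closure chain is a nonrepeating sequence $(f_0,\ldots,f_k)$ of points in $X^T$ with $\overline{X_{f_0,\ldots,f_k}}\neq\emptyset$; $\Delta(X,S)$ is the set of closure chains, regarded as subsets of $X^T$ (a simplicial complex). *)

theory Defs
  imports "HOL-Computational_Algebra.Polynomial"
begin

(* Vectors in k^n: functions nat => k, coordinates indexed by 1..n (zero outside). *)
type_synonym 'k vec = "nat \<Rightarrow> 'k"

definition supported :: "nat \<Rightarrow> 'k::zero vec \<Rightarrow> bool" where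
  "supported n x \<longleftrightarrow> (\<forall>i. i \<notin> {1..n} \<longrightarrow> x i = 0)"

definition scal :: "'k::times \<Rightarrow> 'k vec \<Rightarrow> 'k vec" where
  "scal c x = (\<lambda>i. c * x i)"

(* a point of projective space PV = the line (minus 0) through a nonzero vector *)
definition ppt :: "'k::field vec \<Rightarrow> 'k vec set" where
  "ppt x = {scal c x | c. c \<noteq> 0}"

definition proj_space :: "nat \<Rightarrow> 'k::field vec set set" where
  "proj_space n = {ppt x | x. (\<exists>i. x i \<noteq> 0) \<and> supported n x}"

inductive hpoly :: "nat \<Rightarrow> nat \<Rightarrow> ('k::field vec \<Rightarrow> 'k) \<Rightarrow> bool" for n where
  hconst: "hpoly n 0 (\<lambda>x. c)"
| hvar: "i \<in> {1..n} \<Longrightarrow> hpoly n 1 (\<lambda>x. x i)"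
| hadd: "hpoly n d f \<Longrightarrow> hpoly n d g \<Longrightarrow> hpoly n d (\<lambda>x. f x + g x)"
| hmult: "hpoly n d f \<Longrightarrow> hpoly n e g \<Longrightarrow> hpoly n (d + e) (\<lambda>x. f x * g x)"

(* polynomial functions on A^1 x k^n, homogeneous of degree d in x (arbitrary in z) *)
inductive zhpoly :: "nat \<Rightarrow> nat \<Rightarrow> ('k::field \<Rightarrow> 'k vec \<Rightarrow> 'k) \<Rightarrow> bool" for n where
  zconst: "zhpoly n 0 (\<lambda>z x. c)"
| zzvar: "zhpoly n 0 (\<lambda>z x. z)"
| zvar: "i \<in> {1..n} \<Longrightarrow> zhpoly n 1 (\<lambda>z x. x i)"
| zadd: "zhpoly n d f \<Longrightarrow> zhpoly n d g \<Longrightarrow> zhpoly n d (\<lambda>z x. f z x + g z x)"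
| zmult: "zhpoly n d f \<Longrightarrow> zhpoly n e g \<Longrightarrow> zhpoly n (d + e) (\<lambda>z x. f z x * g z x)"

definition zclosed :: "nat \<Rightarrow> 'k::field vec set set \<Rightarrow> bool" where
  "zclosed n A \<longleftrightarrow> (\<exists>F. (\<forall>f\<in>F. \<exists>d. hpoly n d f) \<and>
      A = {p \<in> proj_space n. \<forall>f\<in>F. \<forall>x\<in>p. f x = 0})"

definition zclosure :: "nat \<Rightarrow> 'k::field vec set set \<Rightarrow> 'k vec set set" where
  "zclosure n A = \<Inter>{C. zclosed n C \<and> A \<subseteq> C}"

definition zclosed2 :: "nat \<Rightarrow> ('k::field \<times> 'k vec set) set \<Rightarrow> bool" where
  "zclosed2 n A \<longleftrightarrow> (\<exists>F. (\<forall>f\<in>F. \<exists>d. zhpoly n d f) \<and>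
      A = {(z, p) | z p. p \<in> proj_space n \<and> (\<forall>f\<in>F. \<forall>x\<in>p. f z x = 0)})"

definition zclosure2 :: "nat \<Rightarrow> ('k::field \<times> 'k vec set) set \<Rightarrow> ('k \<times> 'k vec set) set" where
  "zclosure2 n A = \<Inter>{C. zclosed2 n C \<and> A \<subseteq> C}"

definition tact :: "'k::field vec \<Rightarrow> 'k vec set \<Rightarrow> 'k vec set" where
  "tact t p = (\<lambda>x i. t i * x i) ` p"

definition torus :: "nat \<Rightarrow> 'k::field vec set" where
  "torus n = {t. \<forall>i. t i \<noteq> 0}"

definition Sact :: "(nat \<Rightarrow> int) \<Rightarrow> 'k::field \<Rightarrow> 'k vec set \<Rightarrow> 'k vec set" where
  "Sact \<Phi> z p = tact (\<lambda>i. z powi \<Phi> i) p"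

(* lim_{z\<rightarrow>0} S(z).p = q : the orbit map z \<mapsto> S(z).p on G_m extends to A^1 with 0 \<mapsto> q,
   i.e. (0,q) lies in the closure of the graph {(z, S(z).p) | z \<noteq> 0} in A^1 x P^{n-1} *)
definition bb_lim :: "nat \<Rightarrow> (nat \<Rightarrow> int) \<Rightarrow> 'k::field vec set \<Rightarrow> 'k vec set \<Rightarrow> bool" where
  "bb_lim n \<Phi> p q \<longleftrightarrow> q \<in> proj_space n \<and>
     (0, q) \<in> zclosure2 n {(z, Sact \<Phi> z p) | z. z \<noteq> 0}"

definition fixedT :: "nat \<Rightarrow> 'k::field vec set set \<Rightarrow> 'k vec set set" where
  "fixedT n X = {p \<in> X. \<forall>t\<in>torus n. tact t p = p}"

definition bb_stratum :: "nat \<Rightarrow> (nat \<Rightarrow> int) \<Rightarrow> 'k::field vec set set \<Rightarrow> 'k vec set \<Rightarrow> 'k vec set set" where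
  "bb_stratum n \<Phi> X f = {x \<in> X. bb_lim n \<Phi> x f}"

definition chain_closure :: "nat \<Rightarrow> (nat \<Rightarrow> int) \<Rightarrow> 'k::field vec set set \<Rightarrow> 'k vec set list \<Rightarrow> 'k vec set set" where
  "chain_closure n \<Phi> X fs = foldl (\<lambda>C f. zclosure n (C \<inter> bb_stratum n \<Phi> X f)) X fs"

definition closure_chains :: "nat \<Rightarrow> (nat \<Rightarrow> int) \<Rightarrow> 'k::field vec set set \<Rightarrow> 'k vec set set set" where
  "closure_chains n \<Phi> X = {set fs | fs. distinct fs \<and> set fs \<subseteq> fixedT n X \<and> chain_closure n \<Phi> X fs \<noteq> {}}"

definition coord_subspace :: "nat \<Rightarrow> nat set \<Rightarrow> 'k::field vec set set" where
  "coord_subspace n F = {ppt x | x. (\<exists>i. x i \<noteq> 0) \<and> supported n x \<and> (\<forall>i. i \<notin> F \<longrightarrow> x i = 0)}"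

definition SR_scheme :: "nat \<Rightarrow> nat set set \<Rightarrow> 'k::field vec set set" where
  "SR_scheme n \<Delta> = (\<Union>F\<in>\<Delta>. coord_subspace n F)"

definition coord_pt :: "nat \<Rightarrow> 'k::field vec set" where
  "coord_pt i = ppt (\<lambda>j. if j = i then 1 else 0)"

definition simplicial_complex :: "nat \<Rightarrow> nat set set \<Rightarrow> bool" where
  "simplicial_complex n \<Delta> \<longleftrightarrow> (\<forall>F\<in>\<Delta>. F \<subseteq> {1..n} \<and> (\<forall>G. G \<subseteq> F \<longrightarrow> G \<in> \<Delta>))"

end

theory Submission
  imports Defs
begin

lemma alg_closed_infinite: "infinite (UNIV :: 'k::alg_closed_field set)"
proof
  assume fin: "finite (UNIV :: 'k set)"
  define q :: "'k poly" where "q = (\<Prod>a\<in>UNIV. [:-a,1:])"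
  define p where "p = q + [:1:]"
  have dq: "degree q = card (UNIV :: 'k set)"
    unfolding q_def by (subst degree_prod_eq_sum_degree) auto
  have "card (UNIV :: 'k set) > 0" using fin by (simp add: finite_UNIV_card_ge_0)
  hence "degree p > 0" unfolding p_def using dq
    by (metis degree_add_eq_left degree_pCons_0)
  then obtain x where "poly p x = 0" using alg_closed_imp_poly_has_root by blast
  moreover have "poly q x = 0" unfolding q_def poly_prod using fin
    by (simp add: prod_zero_iff)
  ultimately show False unfolding p_def by simp
qed

lemma poly_zero_at_0:
  fixes q :: "'k::alg_closed_field poly"
  assumes "\<And>z. z \<noteq> 0 \<Longrightarrow> poly q z = 0"
  shows "poly q 0 = 0"
proof (cases "q = 0")
  case False
  hence "finite {x. poly q x = 0}" by (rule poly_roots_finite)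
  moreover have "UNIV - {0} \<subseteq> {x. poly q x = 0}" using assms by auto
  ultimately have "finite (UNIV :: 'k set)"
    by (metis finite_Diff2 finite_subset finite.emptyI finite_insert)
  thus ?thesis using alg_closed_infinite by blast
qed simp

lemma zhpoly_polyfun:
  assumes "zhpoly n d f" "\<And>i. \<exists>q. \<forall>z. w z i = poly q z"
  shows "\<exists>q. \<forall>z. f z (w z) = poly q (z::'k::field)"
  using assms(1)
proof induction
  case (zconst c) show ?case by (rule exI[of _ "[:c:]"]) simp
next
  case zzvar show ?case by (rule exI[of _ "[:0,1:]"]) simp
next
  case (zvar i) show ?case using assms(2) by simp
next
  case (zadd d f g) then obtain p q where "\<forall>z. f z (w z) = poly p z" "\<forall>z. g z (w z) = poly q z" by blast
  thus ?case by (intro exI[of _ "p+q"]) simp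
next
  case (zmult d f e g) then obtain p q where "\<forall>z. f z (w z) = poly p z" "\<forall>z. g z (w z) = poly q z" by blast
  thus ?case by (intro exI[of _ "p*q"]) simp
qed

lemma hpoly_polyfun:
  assumes "hpoly n d f" "\<And>i. \<exists>q. \<forall>z. w z i = poly q z"
  shows "\<exists>q. \<forall>z. f (w z) = poly q (z::'k::field)"
  using assms(1)
proof induction
  case (hconst c) show ?case by (rule exI[of _ "[:c:]"]) simp
next
  case (hvar i) show ?case using assms(2) by simp
next
  case (hadd d f g) then obtain p q where "\<forall>z. f (w z) = poly p z" "\<forall>z. g (w z) = poly q z" by blast
  thus ?case by (intro exI[of _ "p+q"]) simp
next
  case (hmult d f e g) then obtain p q where "\<forall>z. f (w z) = poly p z" "\<forall>z. g (w z) = poly q z" by blast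
  thus ?case by (intro exI[of _ "p*q"]) simp
qed

lemma hpoly_hom: "hpoly n d f \<Longrightarrow> f (scal c x) = c ^ d * f x"
  by (induction rule: hpoly.induct) (auto simp: scal_def power_add algebra_simps)

lemma zhpoly_hom: "zhpoly n d f \<Longrightarrow> f z (scal c x) = c ^ d * f z x"
  by (induction rule: zhpoly.induct) (auto simp: scal_def power_add algebra_simps)

definition ev :: "nat \<Rightarrow> 'k::field vec" where "ev i = (\<lambda>j. if j = i then 1 else 0)"
definition psupp :: "'k::zero vec set \<Rightarrow> nat set" where "psupp p = {i. \<exists>v\<in>p. v i \<noteq> 0}"

lemma mem_ppt: "x \<in> ppt x"
  unfolding ppt_def by (rule CollectI, rule exI[of _ 1]) (simp add: scal_def)

lemma in_ppt: "y \<in> ppt x \<longleftrightarrow> (\<exists>c. c \<noteq> 0 \<and> y = scal c x)"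
  unfolding ppt_def by auto

lemma scal_scal: "scal d (scal c x) = scal (d*c) (x::'k::field vec)"
  unfolding scal_def by (simp add: fun_eq_iff mult.assoc)

lemma ppt_scal: "(c::'k::field) \<noteq> 0 \<Longrightarrow> ppt (scal c x) = ppt x"
proof (rule set_eqI)
  fix y assume c: "c \<noteq> 0"
  show "y \<in> ppt (scal c x) \<longleftrightarrow> y \<in> ppt x"
  proof
    assume "y \<in> ppt (scal c x)"
    then obtain d where "d \<noteq> 0" "y = scal (d*c) x" unfolding in_ppt scal_scal by blast
    thus "y \<in> ppt x" using c unfolding in_ppt by (intro exI[of _ "d*c"]) auto
  next
    assume "y \<in> ppt x"
    then obtain e where e: "e \<noteq> 0" "y = scal e x" unfolding in_ppt by blast
    have "y = scal (e/c) (scal c x)" using e c by (simp add: scal_scal)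
    thus "y \<in> ppt (scal c x)" using e c unfolding in_ppt by (intro exI[of _ "e/c"]) auto
  qed
qed

lemma tact_ppt: "tact t (ppt x) = ppt (\<lambda>k. t k * x k)"
proof (rule set_eqI)
  fix y
  have e: "(\<lambda>i. t i * x' i) = scal c (\<lambda>k. t k * x k)" if "x' = scal c x" for c x'
    using that unfolding scal_def by (simp add: fun_eq_iff algebra_simps)
  show "y \<in> tact t (ppt x) \<longleftrightarrow> y \<in> ppt (\<lambda>k. t k * x k)"
  proof
    assume "y \<in> tact t (ppt x)"
    then obtain x' where "x' \<in> ppt x" "y = (\<lambda>i. t i * x' i)" unfolding tact_def by blast
    then obtain c where "c \<noteq> 0" "x' = scal c x" "y = (\<lambda>i. t i * x' i)" unfolding in_ppt by blast
    thus "y \<in> ppt (\<lambda>k. t k * x k)" using e unfolding in_ppt by blast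
  next
    assume "y \<in> ppt (\<lambda>k. t k * x k)"
    then obtain c where c: "c \<noteq> 0" "y = scal c (\<lambda>k. t k * x k)" unfolding in_ppt by blast
    hence "scal c x \<in> ppt x" "y = (\<lambda>i. t i * scal c x i)" using e[of "scal c x" c] unfolding in_ppt by auto
    thus "y \<in> tact t (ppt x)" unfolding tact_def by blast
  qed
qed

lemma psupp_ppt: "psupp (ppt (x::'k::field vec)) = {i. x i \<noteq> 0}"
proof -
  have "v i \<noteq> 0 \<Longrightarrow> v \<in> ppt x \<Longrightarrow> x i \<noteq> 0" for v i
    unfolding in_ppt scal_def by auto
  moreover have "x i \<noteq> 0 \<Longrightarrow> \<exists>v\<in>ppt x. v i \<noteq> 0" for i
    using mem_ppt by blast
  ultimately show ?thesis unfolding psupp_def by blast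
qed

lemma proj_spaceE:
  assumes "p \<in> proj_space n"
  obtains x where "p = ppt x" "\<exists>i. x i \<noteq> 0" "supported n x"
  using assms unfolding proj_space_def by blast

lemma hpoly_prod: "finite M \<Longrightarrow> M \<subseteq> {1..n} \<Longrightarrow> hpoly n (card M) (\<lambda>x::'k::field vec. \<Prod>i\<in>M. x i)"
proof (induction M rule: finite_induct)
  case empty
  then show ?case using hconst[of n 1] by simp
next
  case (insert i M)
  have "hpoly n (1 + card M) (\<lambda>x::'k vec. x i * (\<Prod>i\<in>M. x i))"
  proof -
    have h: "hpoly n (card M) (\<lambda>x::'k vec. \<Prod>i\<in>M. x i)" using insert by auto
    have "i \<in> {1..n}" using insert by auto
    from hmult[OF hvar[OF this] h] show ?thesis .
  qed
  then show ?case using insert by simp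
qed

lemma zclosed_downset:
  assumes down: "\<And>s s'. s \<subseteq> s' \<Longrightarrow> s' \<in> U \<Longrightarrow> s \<in> U"
  shows "zclosed n {p \<in> proj_space n. psupp p \<in> U}"
  unfolding zclosed_def
proof (intro exI conjI)
  let ?F = "{(\<lambda>x::'a::field vec. \<Prod>i\<in>M. x i) | M. M \<subseteq> {1..n} \<and> M \<notin> U}"
  show "\<forall>f\<in>?F. \<exists>d. hpoly n d f"
  proof
    fix f assume "f \<in> ?F"
    then obtain M where "f = (\<lambda>x. \<Prod>i\<in>M. x i)" "M \<subseteq> {1..n}" by blast
    thus "\<exists>d. hpoly n d f" using hpoly_prod[of M n] finite_subset[OF _ finite_atLeastAtMost] by blast
  qed
  show "{p \<in> proj_space n. psupp p \<in> U} = {p \<in> proj_space n. \<forall>f\<in>?F. \<forall>x\<in>p. f x = 0}"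
  proof (intro Collect_cong conj_cong refl)
    fix p :: "'a vec set" assume "p \<in> proj_space n"
    then obtain x where p: "p = ppt x" "\<exists>i. x i \<noteq> 0" "supported n x" by (rule proj_spaceE)
    have sub: "{i. x i \<noteq> 0} \<subseteq> {1..n}" using p(3) unfolding supported_def by auto
    show "psupp p \<in> U \<longleftrightarrow> (\<forall>f\<in>?F. \<forall>x\<in>p. f x = 0)"
    proof
      assume "psupp p \<in> U"
      hence sU: "{i. x i \<noteq> 0} \<in> U" using p psupp_ppt by metis
      show "\<forall>f\<in>?F. \<forall>x\<in>p. f x = 0"
      proof (intro ballI)
        fix f v assume "f \<in> ?F" "v \<in> p"
        then obtain M where M: "f = (\<lambda>x. \<Prod>i\<in>M. x i)" "M \<subseteq> {1..n}" "M \<notin> U" by blast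
        obtain c where c: "v = scal c x" using \<open>v \<in> p\<close> p in_ppt by metis
        have "\<not> M \<subseteq> {i. x i \<noteq> 0}" using M(3) sU down by blast
        then obtain i where "i \<in> M" "x i = 0" by blast
        moreover have "finite M" using M(2) finite_subset by blast
        ultimately show "f v = 0" using M(1) c by (auto simp: scal_def)
      qed
    next
      assume H: "\<forall>f\<in>?F. \<forall>x\<in>p. f x = 0"
      show "psupp p \<in> U"
      proof (rule ccontr)
        assume "psupp p \<notin> U"
        hence "{i. x i \<noteq> 0} \<notin> U" using p psupp_ppt by metis
        define S where "S = {i. x i \<noteq> 0}"
        have F: "(\<lambda>y. \<Prod>i\<in>S. y i) \<in> ?F" using sub \<open>{i. x i \<noteq> 0} \<notin> U\<close> unfolding S_def by blast
        have xp: "x \<in> p" using p(1) mem_ppt by simp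
        have "\<forall>v\<in>p. (\<lambda>y. \<Prod>i\<in>S. y i) v = 0" using H F by (rule bspec)
        hence "(\<lambda>y. \<Prod>i\<in>S. y i) x = 0" using xp by (rule bspec)
        hence "(\<Prod>i\<in>S. x i) = 0" by simp
        hence "(\<Prod>i\<in>{i. x i \<noteq> 0}. x i) = 0" unfolding S_def .
        moreover have "finite {i. x i \<noteq> 0}" using sub finite_subset by blast
        ultimately show False by simp
      qed
    qed
  qed
qed

lemma coord_pt_ev: "coord_pt i = ppt (ev i)"
  unfolding coord_pt_def ev_def ..

lemma coord_pt_proj: "i \<in> {1..n} \<Longrightarrow> coord_pt i \<in> proj_space n"
  unfolding coord_pt_ev proj_space_def
  by (rule CollectI, rule exI[of _ "ev i"]) (auto simp: ev_def supported_def)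

lemma psupp_coord_pt: "psupp (coord_pt i :: 'k::field vec set) = {i}"
  unfolding coord_pt_ev psupp_ppt by (auto simp: ev_def)

lemma coord_pt_inj: "coord_pt i = (coord_pt j :: 'k::field vec set) \<Longrightarrow> i = j"
  by (metis psupp_coord_pt singleton_inject)

lemma bb_lim_supp:
  assumes p: "p \<in> proj_space n" and y: "y \<in> {1..n}"
    and lim: "bb_lim n \<Phi> p (coord_pt y :: 'k::field vec set)"
  shows "y \<in> psupp p"
proof (rule ccontr)
  assume ny: "y \<notin> psupp p"
  obtain x where x: "p = ppt x" "\<exists>i. x i \<noteq> 0" "supported n x" using p by (rule proj_spaceE)
  have xy: "x y = 0" using ny x(1) psupp_ppt by blast
  define F where "F = {\<lambda>(z::'k) (v::'k vec). v y}"
  define D where "D = {(z, q) | z q. q \<in> proj_space n \<and> (\<forall>f\<in>F. \<forall>v\<in>q. f z v = 0)}"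
  have cD: "zclosed2 n D" unfolding zclosed2_def D_def
    by (rule exI[of _ F]) (auto simp: F_def intro: zvar[OF y])
  have "{(z, Sact \<Phi> z p) | z. z \<noteq> 0} \<subseteq> D"
  proof
    fix w assume "w \<in> {(z, Sact \<Phi> z p) |z. z \<noteq> 0}"
    then obtain z where z: "z \<noteq> 0" "w = (z, Sact \<Phi> z p)" by blast
    have S: "Sact \<Phi> z p = ppt (\<lambda>k. z powi \<Phi> k * x k)" unfolding Sact_def x(1) tact_ppt ..
    obtain i where "x i \<noteq> 0" using x(2) by blast
    hence "z powi \<Phi> i * x i \<noteq> 0" using z by simp
    hence "Sact \<Phi> z p \<in> proj_space n"
      unfolding S proj_space_def
      apply (intro CollectI exI[of _ "\<lambda>k. z powi \<Phi> k * x k"] conjI refl exI[of _ i])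
       apply assumption
      using x(3) by (simp add: supported_def)
    moreover have "\<forall>v\<in>Sact \<Phi> z p. v y = 0" unfolding S using xy by (auto simp: in_ppt scal_def)
    ultimately show "w \<in> D" unfolding D_def z(2) F_def by auto
  qed
  hence "(0, coord_pt y) \<in> D" using lim cD unfolding bb_lim_def zclosure2_def by blast
  hence "\<forall>v\<in>(coord_pt y :: 'k vec set). v y = 0" unfolding D_def F_def by simp
  hence "ev y y = (0::'k)" unfolding coord_pt_ev using mem_ppt by blast
  thus False by (simp add: ev_def)
qed

lemma bb_lim_min:
  assumes x: "supported n x" and y: "x y \<noteq> 0" and ymin: "\<And>i. x i \<noteq> 0 \<Longrightarrow> y \<le> i"
    and mono: "strict_mono_on {1..n} \<Phi>"
  shows "bb_lim n \<Phi> (ppt x) (coord_pt y :: 'k::alg_closed_field vec set)"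
proof -
  have yn: "y \<in> {1..n}" using x y unfolding supported_def by blast
  define m where "m = \<Phi> y"
  have ge: "\<Phi> i \<ge> m" if "x i \<noteq> 0" for i
  proof -
    have "i \<in> {1..n}" using x that unfolding supported_def by blast
    show ?thesis
    proof (cases "y = i")
      case True thus ?thesis by (simp add: m_def)
    next
      case False
      hence "y < i" using ymin[OF that] by simp
      hence "\<Phi> y < \<Phi> i" by (rule strict_mono_onD[OF mono yn \<open>i \<in> {1..n}\<close>])
      thus ?thesis by (simp add: m_def)
    qed
  qed
  have gt: "\<Phi> i > m" if "x i \<noteq> 0" "i \<noteq> y" for i
  proof -
    have "i \<in> {1..n}" using x that unfolding supported_def by blast
    moreover have "y < i" using ymin[OF that(1)] that(2) by simp
    ultimately have "\<Phi> y < \<Phi> i" using strict_mono_onD[OF mono yn] by blast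
    thus ?thesis by (simp add: m_def)
  qed
  define w where "w = (\<lambda>(z::'k) i. z ^ nat (\<Phi> i - m) * x i)"
  have wpoly: "\<exists>q. \<forall>z. w z i = poly q z" for i
    by (rule exI[of _ "monom (x i) (nat (\<Phi> i - m))"]) (simp add: w_def poly_monom mult.commute)
  have wS: "w z \<in> Sact \<Phi> z (ppt x)" if z: "z \<noteq> 0" for z
  proof -
    have "w z = scal (z powi (-m)) (\<lambda>k. z powi \<Phi> k * x k)"
    proof (rule ext)
      fix i show "w z i = scal (z powi (-m)) (\<lambda>k. z powi \<Phi> k * x k) i"
      proof (cases "x i = 0")
        case True thus ?thesis by (simp add: w_def scal_def)
      next
        case False
        have "z powi (-m) * z powi \<Phi> i = z powi (\<Phi> i - m)"
          using z by (simp add: power_int_add[symmetric])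
        also have "\<dots> = z ^ nat (\<Phi> i - m)" using ge[OF False] by (simp add: power_int_def)
        finally show ?thesis by (simp add: w_def scal_def mult.assoc[symmetric])
      qed
    qed
    moreover have "z powi (-m) \<noteq> 0" using z by simp
    ultimately show ?thesis unfolding Sact_def tact_ppt in_ppt by blast
  qed
  have w0: "w 0 = scal (x y) (ev y)"
  proof (rule ext)
    fix i show "w 0 i = scal (x y) (ev y) i"
      using gt[of i] by (cases "x i = 0"; cases "i = y") (auto simp: w_def scal_def ev_def m_def)
  qed
  show ?thesis unfolding bb_lim_def
  proof (intro conjI)
    show "coord_pt y \<in> proj_space n" using yn by (rule coord_pt_proj)
    show "(0, coord_pt y) \<in> zclosure2 n {(z, Sact \<Phi> z (ppt x)) |z. z \<noteq> 0}"
      unfolding zclosure2_def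
    proof (rule InterI, clarify)
      fix C assume cC: "zclosed2 n C" and sub: "{(z, Sact \<Phi> z (ppt x)) |z. z \<noteq> 0} \<subseteq> C"
      obtain F where F: "\<forall>f\<in>F. \<exists>d. zhpoly n d f"
        and C: "C = {(z, p) | z p. p \<in> proj_space n \<and> (\<forall>f\<in>F. \<forall>x\<in>p. f z x = 0)}"
        using cC unfolding zclosed2_def by blast
      have "\<forall>f\<in>F. \<forall>v\<in>(coord_pt y :: 'k vec set). f 0 v = 0"
      proof (intro ballI)
        fix f v assume fF: "f \<in> F" and v: "v \<in> (coord_pt y :: 'k vec set)"
        obtain d where d: "zhpoly n d f" using F fF by blast
        have zero: "f z (w z) = 0" if "z \<noteq> 0" for z
        proof -
          have "(z, Sact \<Phi> z (ppt x)) \<in> C" using sub that by blast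
          thus ?thesis using wS[OF that] fF unfolding C by blast
        qed
        obtain q where q: "\<forall>z. f z (w z) = poly q z" using zhpoly_polyfun[OF d, of w] wpoly by blast
        have "poly q 0 = 0" by (rule poly_zero_at_0) (use q zero in auto)
        hence "f 0 (w 0) = 0" using q by simp
        hence "x y ^ d * f 0 (ev y) = 0" unfolding w0 zhpoly_hom[OF d] .
        hence e0: "f 0 (ev y) = 0" using y by simp
        obtain c where "v = scal c (ev y)" using v unfolding coord_pt_ev in_ppt by blast
        thus "f 0 v = 0" using e0 zhpoly_hom[OF d] by simp
      qed
      thus "(0, coord_pt y) \<in> C" unfolding C using coord_pt_proj[OF yn] by blast
    qed
  qed
qed

lemma zclosed_limit:
  assumes D: "zclosed n D" and x: "\<exists>i. x i \<noteq> 0" "supported n x"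
    and lim: "\<And>t. t \<noteq> 0 \<Longrightarrow> ppt (\<lambda>i. x i + t * e i) \<in> D"
  shows "ppt (x :: 'k::alg_closed_field vec) \<in> D"
proof -
  obtain F where F: "\<forall>f\<in>F. \<exists>d. hpoly n d f"
    and DF: "D = {p \<in> proj_space n. \<forall>f\<in>F. \<forall>x\<in>p. f x = 0}"
    using D unfolding zclosed_def by blast
  have "ppt x \<in> proj_space n" using x unfolding proj_space_def by blast
  moreover have "\<forall>f\<in>F. \<forall>v\<in>ppt x. f v = 0"
  proof (intro ballI)
    fix f v assume fF: "f \<in> F" and v: "v \<in> ppt x"
    obtain d where d: "hpoly n d f" using F fF by blast
    have wpoly: "\<exists>q. \<forall>t. x i + t * e i = poly q t" for i
      by (rule exI[of _ "[:x i, e i:]"]) simp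
    have "\<exists>q. \<forall>t. f ((\<lambda>t i. x i + t * e i) t) = poly q t"
      by (rule hpoly_polyfun[OF d]) (simp add: wpoly)
    then obtain q where q: "\<forall>t. f (\<lambda>i. x i + t * e i) = poly q t" by auto
    have zero: "f (\<lambda>i. x i + t * e i) = 0" if "t \<noteq> 0" for t
      using lim[OF that] fF mem_ppt unfolding DF by blast
    have "poly q 0 = 0" by (rule poly_zero_at_0) (use q zero in auto)
    hence fx: "f x = 0" using q[rule_format, of 0] by simp
    obtain c where "v = scal c x" using v unfolding in_ppt by blast
    thus "f v = 0" using fx hpoly_hom[OF d] by simp
  qed
  ultimately show ?thesis unfolding DF by blast
qed

lemma fixed_coord:
  assumes "p \<in> fixedT n X" "X \<subseteq> proj_space n"
  shows "\<exists>i\<in>{1..n}. p = (coord_pt i :: 'k::alg_closed_field vec set)"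
proof -
  have pX: "p \<in> proj_space n" and fx: "\<forall>t\<in>torus n. tact t p = p"
    using assms unfolding fixedT_def by auto
  obtain x where x: "p = ppt x" "\<exists>i. x i \<noteq> 0" "supported n x" using pX by (rule proj_spaceE)
  obtain i where xi: "x i \<noteq> 0" using x(2) by blast
  have only: "x j = 0" if ji: "j \<noteq> i" for j
  proof (rule ccontr)
    assume xj: "x j \<noteq> 0"
    obtain a :: 'k where a: "a \<notin> {0,1}"
      using ex_new_if_finite[OF alg_closed_infinite, of "{0,1}"] by auto
    define t where "t = (\<lambda>k. if k = j then a else (1::'k))"
    have "t \<in> torus n" using a unfolding t_def torus_def by auto
    hence "tact t p = p" using fx by blast
    hence "ppt (\<lambda>k. t k * x k) = ppt x" unfolding x(1) tact_ppt .
    hence "(\<lambda>k. t k * x k) \<in> ppt x" using mem_ppt by metis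
    then obtain c where c: "(\<lambda>k. t k * x k) = scal c x" unfolding in_ppt by blast
    have "1 * x i = c * x i" using fun_cong[OF c, of i] ji unfolding t_def scal_def by simp
    hence c1: "c = 1" using xi by (metis mult_cancel_right)
    have "a * x j = c * x j" using fun_cong[OF c, of j] unfolding t_def scal_def by simp
    hence "a = c" using xj by (metis mult_cancel_right)
    thus False using a c1 by simp
  qed
  have "i \<in> {1..n}" using x(3) xi unfolding supported_def by blast
  moreover have "x = scal (x i) (ev i)" by (rule ext) (auto simp: scal_def ev_def only)
  hence "p = coord_pt i" unfolding x(1) coord_pt_ev using ppt_scal xi by metis
  ultimately show ?thesis by blast
qed

lemma SR_mem:
  assumes sc: "simplicial_complex n \<Delta>"
  shows "p \<in> SR_scheme n \<Delta> \<longleftrightarrow> p \<in> proj_space n \<and> psupp p \<in> \<Delta>"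
proof
  assume "p \<in> SR_scheme n \<Delta>"
  then obtain F x where F: "F \<in> \<Delta>" and x: "p = ppt x" "\<exists>i. x i \<noteq> 0" "supported n x"
    "\<forall>i. i \<notin> F \<longrightarrow> x i = 0"
    unfolding SR_scheme_def coord_subspace_def by blast
  have "psupp p \<subseteq> F" unfolding x(1) psupp_ppt using x(4) by blast
  hence "psupp p \<in> \<Delta>" using sc F unfolding simplicial_complex_def by blast
  moreover have "p \<in> proj_space n" unfolding proj_space_def using x by blast
  ultimately show "p \<in> proj_space n \<and> psupp p \<in> \<Delta>" by blast
next
  assume H: "p \<in> proj_space n \<and> psupp p \<in> \<Delta>"
  then obtain x where x: "p = ppt x" "\<exists>i. x i \<noteq> 0" "supported n x" using proj_spaceE by blast
  have "{i. x i \<noteq> 0} \<in> \<Delta>" using H x(1) psupp_ppt by metis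
  moreover have "p \<in> coord_subspace n {i. x i \<noteq> 0}"
    unfolding coord_subspace_def using x by blast
  ultimately show "p \<in> SR_scheme n \<Delta>" unfolding SR_scheme_def by blast
qed

lemma upper:
  assumes sc: "simplicial_complex n \<Delta>" and XP: "X \<subseteq> proj_space n"
  shows "set ys \<subseteq> {1..n} \<Longrightarrow> C \<subseteq> {p \<in> proj_space n. psupp p \<union> S \<in> \<Delta>} \<Longrightarrow>
    foldl (\<lambda>C f. zclosure n (C \<inter> bb_stratum n \<Phi> X f)) C (map coord_pt ys)
      \<subseteq> {p \<in> proj_space n. psupp p \<union> (S \<union> set ys) \<in> \<Delta>}"
proof (induction ys arbitrary: C S)
  case Nil thus ?case by simp
next
  case (Cons y ys)
  let ?T = "S \<union> {y}"
  let ?Z = "{p \<in> proj_space n. psupp p \<union> ?T \<in> \<Delta>}"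
  have "zclosed n {p \<in> proj_space n. psupp p \<in> {s. s \<union> ?T \<in> \<Delta>}}"
  proof (rule zclosed_downset)
    fix s s' assume "s \<subseteq> s'" "s' \<in> {s. s \<union> ?T \<in> \<Delta>}"
    thus "s \<in> {s. s \<union> ?T \<in> \<Delta>}" using sc unfolding simplicial_complex_def
      by (metis (no_types, lifting) Un_mono mem_Collect_eq order_refl)
  qed
  hence cl: "zclosed n ?Z" by simp
  have yn: "y \<in> {1..n}" using Cons.prems by simp
  have sub: "C \<inter> bb_stratum n \<Phi> X (coord_pt y) \<subseteq> ?Z"
  proof
    fix p assume p: "p \<in> C \<inter> bb_stratum n \<Phi> X (coord_pt y)"
    hence pC: "p \<in> proj_space n" "psupp p \<union> S \<in> \<Delta>" using Cons.prems by auto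
    have "bb_lim n \<Phi> p (coord_pt y)" using p unfolding bb_stratum_def by blast
    hence "y \<in> psupp p" using bb_lim_supp[OF pC(1) yn] by blast
    hence "psupp p \<union> ?T = psupp p \<union> S" by blast
    thus "p \<in> ?Z" using pC by simp
  qed
  have "zclosure n (C \<inter> bb_stratum n \<Phi> X (coord_pt y)) \<subseteq> ?Z"
    unfolding zclosure_def using cl sub by blast
  from Cons.IH[OF _ this] Cons.prems(1)
  have "foldl (\<lambda>C f. zclosure n (C \<inter> bb_stratum n \<Phi> X f))
          (zclosure n (C \<inter> bb_stratum n \<Phi> X (coord_pt y))) (map coord_pt ys)
        \<subseteq> {p \<in> proj_space n. psupp p \<union> (?T \<union> set ys) \<in> \<Delta>}" by simp
  moreover have "?T \<union> set ys = S \<union> set (y # ys)" by auto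
  ultimately show ?case by simp
qed

lemma lower:
  assumes sc: "simplicial_complex n \<Delta>"
    and XD: "\<And>p. p \<in> proj_space n \<Longrightarrow> psupp p \<in> \<Delta> \<Longrightarrow> p \<in> X"
    and mono: "strict_mono_on {1..n} \<Phi>"
  shows "sorted_wrt (<) ys \<Longrightarrow> set ys \<in> \<Delta> \<Longrightarrow> ys \<noteq> [] \<Longrightarrow>
    {ppt x | x. supported n x \<and> {i. x i \<noteq> 0} = set ys} \<subseteq> C \<Longrightarrow>
    foldl (\<lambda>C f. zclosure n (C \<inter> bb_stratum n \<Phi> X f)) C (map coord_pt ys)
      \<noteq> ({} :: 'k::alg_closed_field vec set set)"
proof (induction ys arbitrary: C)
  case Nil thus ?case by simp
next
  case (Cons y ys)
  define A where "A = C \<inter> bb_stratum n \<Phi> X (coord_pt y)"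
  have ysn: "set (y # ys) \<subseteq> {1..n}" using sc Cons.prems(2) unfolding simplicial_complex_def by blast
  hence yn: "y \<in> {1..n}" by simp
  have ylt: "\<forall>z\<in>set ys. y < z" using Cons.prems(1) by simp
  have UA: "{ppt x | x. supported n x \<and> {i. x i \<noteq> 0} = set (y # ys)} \<subseteq> A"
  proof
    fix q :: "'k vec set" assume "q \<in> {ppt x | x. supported n x \<and> {i. x i \<noteq> 0} = set (y # ys)}"
    then obtain x where q: "q = ppt x" and x: "supported n x" "{i. x i \<noteq> 0} = set (y # ys)" by blast
    have qC: "q \<in> C" using Cons.prems(4) q x by blast
    have xy: "x y \<noteq> 0" using x(2) by auto
    have "q \<in> proj_space n" unfolding q proj_space_def using x(1) xy by blast
    moreover have "psupp q \<in> \<Delta>" unfolding q psupp_ppt x(2) by (rule Cons.prems(2))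
    ultimately have "q \<in> X" by (rule XD)
    moreover have "bb_lim n \<Phi> q (coord_pt y)" unfolding q
    proof (rule bb_lim_min[OF x(1) xy _ mono])
      fix i assume "x i \<noteq> 0"
      hence "i \<in> set (y # ys)" using x(2) by blast
      thus "y \<le> i" using ylt by auto
    qed
    ultimately show "q \<in> A" unfolding A_def bb_stratum_def using qC by blast
  qed
  have AC: "A \<subseteq> zclosure n A" unfolding zclosure_def by blast
  show ?case
  proof (cases "ys = []")
    case True
    have "ppt (ev y :: 'k vec) \<in> {ppt x | x. supported n x \<and> {i. x i \<noteq> 0} = set (y # ys)}"
      using yn True by (intro CollectI exI[of _ "ev y"]) (auto simp: supported_def ev_def)
    hence "zclosure n A \<noteq> {}" using UA AC by blast
    thus ?thesis using True by (simp add: A_def)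
  next
    case False
    have "{ppt x | x. supported n x \<and> {i. x i \<noteq> 0} = set ys} \<subseteq> zclosure n A"
    proof
      fix q :: "'k vec set" assume "q \<in> {ppt x | x. supported n x \<and> {i. x i \<noteq> 0} = set ys}"
      then obtain x where q: "q = ppt x" and x: "supported n x" "{i. x i \<noteq> 0} = set ys" by blast
      have xiff: "x i \<noteq> 0 \<longleftrightarrow> i \<in> set ys" for i using x(2) by blast
      obtain z where "z \<in> set ys" using False by (cases ys) auto
      hence xnz: "\<exists>i. x i \<noteq> 0" using xiff by blast
      have "y \<notin> set ys" using ylt by blast
      hence xy: "x y = 0" using xiff by blast
      show "q \<in> zclosure n A" unfolding zclosure_def
      proof (rule InterI, clarify)
        fix D assume D: "zclosed n D" "A \<subseteq> D"
        show "q \<in> D" unfolding q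
        proof (rule zclosed_limit[OF D(1) xnz x(1)])
          fix t :: 'k assume t: "t \<noteq> 0"
          have "supported n (\<lambda>i. x i + t * ev y i)"
            using x(1) yn unfolding supported_def ev_def by auto
          moreover have "{i. x i + t * ev y i \<noteq> 0} = set (y # ys)"
          proof (rule set_eqI)
            fix i show "i \<in> {i. x i + t * ev y i \<noteq> 0} \<longleftrightarrow> i \<in> set (y # ys)"
            proof (cases "i = y")
              case True thus ?thesis using xy t by (simp add: ev_def)
            next
              case False thus ?thesis using xiff[of i] by (simp add: ev_def)
            qed
          qed
          ultimately show "ppt (\<lambda>i. x i + t * ev y i) \<in> D" using UA D(2) by blast
        qed
      qed
    qed
    moreover have "sorted_wrt (<) ys" using Cons.prems(1) by simp
    moreover have "set ys \<in> \<Delta>" using sc Cons.prems(2) unfolding simplicial_complex_def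
      by (meson set_subset_Cons)
    ultimately have "foldl (\<lambda>C f. zclosure n (C \<inter> bb_stratum n \<Phi> X f)) (zclosure n A) (map coord_pt ys) \<noteq> {}"
      using Cons.IH False by blast
    thus ?thesis by (simp add: A_def)
  qed
qed

theorem proposition1p1:
  fixes n :: nat and \<Delta> :: "nat set set" and \<Phi> :: "nat \<Rightarrow> int"
  assumes "simplicial_complex n \<Delta>"
    and "\<exists>F\<in>\<Delta>. F \<noteq> {}"
    and "strict_mono_on {1..n} \<Phi>"
  shows "closure_chains n \<Phi> (SR_scheme n \<Delta> :: 'k::alg_closed_field vec set set)
           = (\<lambda>F. coord_pt ` F) ` \<Delta>"
proof -
  note sc = assms(1) and mono = assms(3)
  define X where "X = (SR_scheme n \<Delta> :: 'k vec set set)"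
  have XP: "X \<subseteq> proj_space n" unfolding X_def by (auto simp: SR_mem[OF sc])
  have XD: "\<And>p. p \<in> proj_space n \<Longrightarrow> psupp p \<in> \<Delta> \<Longrightarrow> p \<in> X" unfolding X_def by (simp add: SR_mem[OF sc])
  have X0: "X \<subseteq> {p \<in> proj_space n. psupp p \<union> {} \<in> \<Delta>}" unfolding X_def by (auto simp: SR_mem[OF sc])
  have cpX: "coord_pt i \<in> X" if "i \<in> F" "F \<in> \<Delta>" for i F
  proof -
    have i1: "i \<in> {1..n}" using sc that unfolding simplicial_complex_def by blast
    have "{i} \<in> \<Delta>" using sc that unfolding simplicial_complex_def by blast
    hence "psupp (coord_pt i :: 'k vec set) \<in> \<Delta>" by (simp only: psupp_coord_pt)
    thus ?thesis by (rule XD[OF coord_pt_proj[OF i1]])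
  qed
  have "closure_chains n \<Phi> X = (\<lambda>F. coord_pt ` F) ` \<Delta>"
    unfolding closure_chains_def
  proof (rule set_eqI, rule iffI)
    fix A :: "'k vec set set" assume "A \<in> {set fs |fs. distinct fs \<and> set fs \<subseteq> fixedT n X \<and> chain_closure n \<Phi> X fs \<noteq> {}}"
    then obtain fs where A: "A = set fs" and fx: "set fs \<subseteq> fixedT n X"
      and ne: "chain_closure n \<Phi> X fs \<noteq> {}" by blast
    have ex: "\<exists>i. i \<in> {1..n} \<and> f = coord_pt i" if "f \<in> set fs" for f :: "'k vec set"
      using fixed_coord[OF _ XP] fx that by blast
    define g where "g f = (SOME i. i \<in> {1..n} \<and> f = coord_pt i)" for f :: "'k vec set"
    have gi: "g f \<in> {1..n} \<and> f = coord_pt (g f)" if "f \<in> set fs" for f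
      unfolding g_def using someI_ex[OF ex[OF that]] .
    define ys where "ys = map g fs"
    have fs: "fs = map coord_pt ys" unfolding ys_def map_map
      by (rule sym, rule map_idI) (use gi in auto)
    have ysn: "set ys \<subseteq> {1..n}" unfolding ys_def using gi by auto
    have sub: "chain_closure n \<Phi> X fs \<subseteq> {p \<in> proj_space n. psupp p \<union> ({} \<union> set ys) \<in> \<Delta>}"
      unfolding chain_closure_def fs by (rule upper[OF sc XP ysn X0])
    obtain p where "p \<in> chain_closure n \<Phi> X fs" using ne by blast
    hence "psupp p \<union> ({} \<union> set ys) \<in> \<Delta>" using sub by blast
    hence "psupp p \<union> set ys \<in> \<Delta>" by simp
    moreover have "set ys \<subseteq> psupp p \<union> set ys" by blast
    ultimately have "set ys \<in> \<Delta>" using sc unfolding simplicial_complex_def by blast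
    moreover have "A = coord_pt ` set ys" unfolding A fs by simp
    ultimately show "A \<in> (\<lambda>F. coord_pt ` F) ` \<Delta>" by blast
  next
    fix A :: "'k vec set set" assume "A \<in> (\<lambda>F. coord_pt ` F) ` \<Delta>"
    then obtain F where A: "A = coord_pt ` F" and F: "F \<in> \<Delta>" by blast
    have Fn: "F \<subseteq> {1..n}" using sc F unfolding simplicial_complex_def by blast
    hence finF: "finite F" using finite_subset by blast
    define ys where "ys = sorted_list_of_set F"
    have sys: "set ys = F" unfolding ys_def using finF by simp
    define fs where "fs = map (coord_pt :: nat \<Rightarrow> 'k vec set) ys"
    have "distinct fs" unfolding fs_def distinct_map
    proof
      show "distinct ys" unfolding ys_def by simp
      show "inj_on (coord_pt :: nat \<Rightarrow> 'k vec set) (set ys)"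
        by (rule inj_onI) (rule coord_pt_inj)
    qed
    moreover have "set fs \<subseteq> fixedT n X"
    proof
      fix f assume "f \<in> set fs"
      then obtain i where i: "i \<in> F" "f = coord_pt i" unfolding fs_def sys[symmetric] by auto
      have "tact t (coord_pt i) = (coord_pt i :: 'k vec set)" if t: "t \<in> torus n" for t
      proof -
        have "(\<lambda>k. t k * ev i k) = scal (t i) (ev i :: 'k vec)"
          by (rule ext) (simp add: scal_def ev_def)
        moreover have "t i \<noteq> 0" using t unfolding torus_def by blast
        ultimately show ?thesis unfolding coord_pt_ev tact_ppt by (simp add: ppt_scal)
      qed
      thus "f \<in> fixedT n X" unfolding fixedT_def i(2) using cpX[OF i(1) F] by blast
    qed
    moreover have "chain_closure n \<Phi> X fs \<noteq> {}"
    proof (cases "F = {}")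
      case True
      hence "fs = []" unfolding fs_def ys_def by simp
      moreover obtain F' i where "F' \<in> \<Delta>" "i \<in> F'" using assms(2) by blast
      ultimately show ?thesis using cpX unfolding chain_closure_def by auto
    next
      case False
      have "sorted_wrt (<) ys" unfolding ys_def by simp
      moreover have "set ys \<in> \<Delta>" using sys F by simp
      moreover have "ys \<noteq> []" using False sys by auto
      moreover have "{ppt x | x. supported n x \<and> {i. x i \<noteq> 0} = set ys} \<subseteq> X"
      proof
        fix q :: "'k vec set" assume "q \<in> {ppt x | x. supported n x \<and> {i. x i \<noteq> 0} = set ys}"
        then obtain x where q: "q = ppt x" and x: "supported n x" "{i. x i \<noteq> 0} = set ys" by blast
        obtain j where "j \<in> F" using False by blast
        hence "x j \<noteq> 0" using x(2) sys by blast
        hence "q \<in> proj_space n" unfolding q proj_space_def using x(1) by blast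
        moreover have "psupp q \<in> \<Delta>" unfolding q psupp_ppt x(2) sys using F .
        ultimately show "q \<in> X" by (rule XD)
      qed
      ultimately show ?thesis unfolding chain_closure_def fs_def
        using lower[OF sc XD assms(3)] by blast
    qed
    ultimately show "A \<in> {set fs |fs. distinct fs \<and> set fs \<subseteq> fixedT n X \<and> chain_closure n \<Phi> X fs \<noteq> {}}"
      unfolding A using sys unfolding fs_def by auto
  qed
  thus ?thesis unfolding X_def .
qed

end
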